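(* Let $n\ge2$ and let $f:\{0,1\}^{n-1}\to\{0,1\}$ be a monotone Boolean function (i.e. $x\le y$ coordinatewise implies $f(x)\le f(y)$). Define the orientation $\Phi_f$ of the $n$-cube by: for $i\ne n$, $v\to v\oplus i$ iff $v_i=0$; and $v\to v\oplus n$ iff $v_n+f(v')=1$, where $v'\in\{0,1\}^{n-1}$ consists of the first $n-1$ coordinates of $v$. Then $\Phi_f$ is an acyclic, locally uniform, strongly Holt--Klee unique-sink orientation, and distinct monotone functions $f$ give distinct orientations $\Phi_f$.
   Context: For $v\in\{0,1\}^n$ and $I\subseteq[n]$, $v\oplus I$ is obtained from $v$ by flipping the coordinates in $I$; $v\oplus i:=v\oplus\{i\}$. The $n$-cube has vertex set $\{0,1\}^n$ and edges $\{v,v\oplus i\}$. A subcube is the induced subgraph on a vertex set $\{v\oplus I: I\subseteq C\}$ for some vertex $v$ and $C\subseteq[n]$; its dimension is $|C|$. A unique-sink orientation (USO) is an orientation of the $n$-cube in which every subcube has exactly one sink; then every subcube also has a unique source. For an orientation $\Phi$ and $F\subseteq[n]$, $\Phi^{(F)}$ is obtained by reversing all edges $\{v,v\oplus i\}$ with $i\in F$. A USO is Holt--Klee if in every subcube of dimension $d$ there are $d$ directed paths from the subcube's source to its sink, pairwise sharing no vertex other than source and sink. A USO $\Phi$ is strongly Holt--Klee if $\Phi^{(F)}$ is Holt--Klee for every $F\subseteq[n]$. A USO is locally uniform if (i) whenever $u_i=u_j=0$, $u\to u\oplus i$ and $u\to u\oplus j$, then $u\oplus i\to u\oplus\{i,j\}$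 and $u\oplus j\to u\oplus\{i,j\}$; and (ii) whenever $u_i=u_j=0$, $u\oplus i\to u$ and $u\oplus j\to u$, then $u\oplus\{i,j\}\to u\oplus i$ and $u\oplus\{i,j\}\to u\oplus j$. Acyclic means no directed cycle. *)

theory Defs
  imports Main
begin

text \<open>Vertices of the n-cube {0,1}^n are encoded as subsets v of {1..n}:
  coordinate i of v is 1 iff i \<in> v. An orientation is a relation Ori on
  vertices: Ori v w means the directed edge v \<rightarrow> w.\<close>

definition flipset :: "nat set \<Rightarrow> nat set \<Rightarrow> nat set" where
  "flipset v I = (v - I) \<union> (I - v)"

definition flip :: "nat set \<Rightarrow> nat \<Rightarrow> nat set" where
  "flip v i = flipset v {i}"

definition is_orientation :: "nat \<Rightarrow> (nat set \<Rightarrow> nat set \<Rightarrow> bool) \<Rightarrow> bool" where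
  "is_orientation n Ori \<longleftrightarrow>
     (\<forall>v w. Ori v w \<longrightarrow> v \<subseteq> {1..n} \<and> (\<exists>i\<in>{1..n}. w = flip v i)) \<and>
     (\<forall>v. v \<subseteq> {1..n} \<longrightarrow> (\<forall>i\<in>{1..n}. Ori v (flip v i) \<noteq> Ori (flip v i) v))"

definition subcube :: "nat set \<Rightarrow> nat set \<Rightarrow> nat set set" where
  "subcube v C = {flipset v I | I. I \<subseteq> C}"

definition is_sink_in :: "(nat set \<Rightarrow> nat set \<Rightarrow> bool) \<Rightarrow> nat set \<Rightarrow> nat set \<Rightarrow> nat set \<Rightarrow> bool" where
  "is_sink_in Ori v C u \<longleftrightarrow> u \<in> subcube v C \<and> (\<forall>i\<in>C. \<not> Ori u (flip u i))"

definition is_source_in :: "(nat set \<Rightarrow> nat set \<Rightarrow> bool) \<Rightarrow> nat set \<Rightarrow> nat set \<Rightarrow> nat set \<Rightarrow> bool" where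
  "is_source_in Ori v C u \<longleftrightarrow> u \<in> subcube v C \<and> (\<forall>i\<in>C. \<not> Ori (flip u i) u)"

definition USO :: "nat \<Rightarrow> (nat set \<Rightarrow> nat set \<Rightarrow> bool) \<Rightarrow> bool" where
  "USO n Ori \<longleftrightarrow> is_orientation n Ori \<and>
     (\<forall>v C. v \<subseteq> {1..n} \<longrightarrow> C \<subseteq> {1..n} \<longrightarrow> (\<exists>!u. is_sink_in Ori v C u))"

definition reorient :: "nat set \<Rightarrow> (nat set \<Rightarrow> nat set \<Rightarrow> bool) \<Rightarrow> (nat set \<Rightarrow> nat set \<Rightarrow> bool)" where
  "reorient F Ori v w = (if (\<exists>i\<in>F. w = flip v i) then Ori w v else Ori v w)"

definition dipath_in :: "(nat set \<Rightarrow> nat set \<Rightarrow> bool) \<Rightarrow> nat set set \<Rightarrow> nat set list \<Rightarrow> nat set \<Rightarrow> nat set \<Rightarrow> bool" where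
  "dipath_in Ori S p s t \<longleftrightarrow> p \<noteq> [] \<and> hd p = s \<and> last p = t \<and> distinct p \<and> set p \<subseteq> S \<and>
     (\<forall>k. Suc k < length p \<longrightarrow> Ori (p ! k) (p ! Suc k))"

definition holt_klee :: "nat \<Rightarrow> (nat set \<Rightarrow> nat set \<Rightarrow> bool) \<Rightarrow> bool" where
  "holt_klee n Ori \<longleftrightarrow>
     (\<forall>v C s t. v \<subseteq> {1..n} \<longrightarrow> C \<subseteq> {1..n} \<longrightarrow> is_source_in Ori v C s \<longrightarrow> is_sink_in Ori v C t \<longrightarrow>
        (\<exists>P :: nat \<Rightarrow> nat set list. inj_on P {..<card C} \<and>
           (\<forall>k<card C. dipath_in Ori (subcube v C) (P k) s t) \<and>
           (\<forall>k<card C. \<forall>l<card C. k \<noteq> l \<longrightarrow> (set (P k) \<inter> set (P l)) \<subseteq> {s, t})))"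

definition strongly_holt_klee :: "nat \<Rightarrow> (nat set \<Rightarrow> nat set \<Rightarrow> bool) \<Rightarrow> bool" where
  "strongly_holt_klee n Ori \<longleftrightarrow> (\<forall>F. F \<subseteq> {1..n} \<longrightarrow> holt_klee n (reorient F Ori))"

definition locally_uniform :: "nat \<Rightarrow> (nat set \<Rightarrow> nat set \<Rightarrow> bool) \<Rightarrow> bool" where
  "locally_uniform n Ori \<longleftrightarrow>
     (\<forall>u i j. u \<subseteq> {1..n} \<longrightarrow> i \<in> {1..n} \<longrightarrow> j \<in> {1..n} \<longrightarrow> i \<noteq> j \<longrightarrow> i \<notin> u \<longrightarrow> j \<notin> u \<longrightarrow>
        ((Ori u (flip u i) \<and> Ori u (flip u j)) \<longrightarrow>
            (Ori (flip u i) (flipset u {i, j}) \<and> Ori (flip u j) (flipset u {i, j}))) \<and>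
        ((Ori (flip u i) u \<and> Ori (flip u j) u) \<longrightarrow>
            (Ori (flipset u {i, j}) (flip u i) \<and> Ori (flipset u {i, j}) (flip u j))))"

definition acyclic_orientation :: "(nat set \<Rightarrow> nat set \<Rightarrow> bool) \<Rightarrow> bool" where
  "acyclic_orientation Ori \<longleftrightarrow> acyclic {(v, w). Ori v w}"

definition monotone_bool :: "nat \<Rightarrow> (nat set \<Rightarrow> bool) \<Rightarrow> bool" where
  "monotone_bool m f \<longleftrightarrow> (\<forall>x y. x \<subseteq> y \<longrightarrow> y \<subseteq> {1..m} \<longrightarrow> f x \<longrightarrow> f y)"

definition Phi :: "nat \<Rightarrow> (nat set \<Rightarrow> bool) \<Rightarrow> nat set \<Rightarrow> nat set \<Rightarrow> bool" where
  "Phi n f v w \<longleftrightarrow> v \<subseteq> {1..n} \<and>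
     ((\<exists>i\<in>{1..n-1}. w = flip v i \<and> i \<notin> v) \<or>
      (w = flip v n \<and> ((n \<in> v) \<noteq> f (v - {n}))))"

end

theory Submission
  imports Defs
begin

lemma mem_flipset[simp]: "x \<in> flipset v I \<longleftrightarrow> (x \<in> v) \<noteq> (x \<in> I)"
  by (auto simp: flipset_def)

lemma flip_eq: "flip v i = flipset v {i}" by (simp add: flip_def)

lemma mem_flip[simp]: "x \<in> flip v i \<longleftrightarrow> (x \<in> v) \<noteq> (x = i)"
  by (auto simp: flip_def)

lemma flipset_eq_iff: "flipset s X = flipset s Y \<longleftrightarrow> X = Y"
  by (auto simp: set_eq_iff)

lemma flip_inj: "flip u i = flip u j \<longleftrightarrow> i = j"
  by (auto simp: set_eq_iff)

lemma flip_flip[simp]: "flip (flip u i) i = u"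
  by (auto simp: set_eq_iff)

lemma flip_minus_same[simp]: "flip u i - {i} = u - {i}" by auto

lemma flip_sub: "u \<subseteq> {1..n} \<Longrightarrow> i \<in> {1..n} \<Longrightarrow> flip u i \<subseteq> {1..n}"
  by (auto simp: subset_iff)

lemma Q_char:
  assumes u: "u \<subseteq> {1..n}" and i: "i \<in> {1..n}" and n: "2 \<le> n"
  shows "reorient F (Phi n f) u (flip u i) \<longleftrightarrow>
     (if i = n then (n \<in> u) \<noteq> (f (u - {n}) \<noteq> (n \<in> F)) else (i \<in> u) = (i \<in> F))"
proof -
  have e: "(\<exists>j\<in>F. flip u i = flip u j) \<longleftrightarrow> i \<in> F" by (simp add: flip_inj)
  have fs: "flip u i \<subseteq> {1..n}" using flip_sub[OF u i] .
  have a: "Phi n f u (flip u i) \<longleftrightarrow> (if i = n then (n \<in> u) \<noteq> f (u - {n}) else i \<notin> u)"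
    using i n u unfolding Phi_def by (auto simp: flip_inj)
  have b: "Phi n f (flip u i) u \<longleftrightarrow> (if i = n then (n \<notin> u) \<noteq> f (u - {n}) else i \<in> u)"
  proof -
    have "u = flip (flip u i) i" by simp
    have r: "flip u i - {n} = (if i = n then u - {n} else flip u i - {n})" by auto
    have h: "\<And>j. u = flip (flip u i) j \<longleftrightarrow> j = i" by (metis flip_flip flip_inj)
    show ?thesis
    proof (cases "i = n")
      case True
      have hn: "\<And>j. u = flip (flip u n) j \<longleftrightarrow> j = n" by (metis flip_flip flip_inj)
      have fs': "flip u n \<subseteq> {1..n}" using fs True by simp
      show ?thesis unfolding Phi_def using True fs' n by (auto simp: hn)
    next
      case False
      show ?thesis unfolding Phi_def using False fs i by (auto simp: h)
    qed
  qed
  show ?thesis unfolding reorient_def e using a b by auto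
qed


lemma reorient_empty[simp]: "reorient {} Ori = Ori"
  by (auto simp: reorient_def fun_eq_iff)

lemma Phi_char:
  assumes u: "u \<subseteq> {1..n}" and i: "i \<in> {1..n}" and n: "2 \<le> n"
  shows "Phi n f u (flip u i) \<longleftrightarrow>
     (if i = n then (n \<in> u) \<noteq> f (u - {n}) else i \<notin> u)"
  using Q_char[OF u i n, of "{}" f] by simp

lemma flipset_flipset[simp]: "flipset v (flipset v u) = u"
  by (auto simp: set_eq_iff)

lemma flipset_assoc: "flipset (flipset v I) J = flipset v (flipset I J)"
  by (auto simp: set_eq_iff)

lemma subcube_iff: "u \<in> subcube v C \<longleftrightarrow> flipset v u \<subseteq> C"
  unfolding subcube_def
proof
  assume "u \<in> {flipset v I |I. I \<subseteq> C}"
  then show "flipset v u \<subseteq> C" by auto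
next
  assume h: "flipset v u \<subseteq> C"
  show "u \<in> {flipset v I |I. I \<subseteq> C}" using h by (intro CollectI exI[of _ "flipset v u"]) simp
qed

lemma flipset_sub_bound: "flipset v u \<subseteq> C \<Longrightarrow> v \<subseteq> {1..n} \<Longrightarrow> C \<subseteq> {1..n} \<Longrightarrow> u \<subseteq> {1..n}"
  by (auto simp: subset_iff)

lemma ball_iff: "(\<And>i. i \<in> C \<Longrightarrow> P i = R i) \<Longrightarrow> (\<forall>i\<in>C. P i) = (\<forall>i\<in>C. R i)"
  by auto

lemma sink_char:
  assumes v: "v \<subseteq> {1..n}" and C: "C \<subseteq> {1..n}" and n: "2 \<le> n"
  shows "is_sink_in (reorient F (Phi n f)) v C u \<longleftrightarrow> flipset v u \<subseteq> C \<and>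
    (\<forall>i\<in>C. if i = n then (n \<in> u) = (f (u - {n}) \<noteq> (n \<in> F)) else (i \<in> u) \<noteq> (i \<in> F))"
proof -
  have "flipset v u \<subseteq> C \<Longrightarrow> (\<forall>i\<in>C. \<not> reorient F (Phi n f) u (flip u i)) \<longleftrightarrow>
    (\<forall>i\<in>C. if i = n then (n \<in> u) = (f (u - {n}) \<noteq> (n \<in> F)) else (i \<in> u) \<noteq> (i \<in> F))"
  proof -
    assume "flipset v u \<subseteq> C"
    then have u: "u \<subseteq> {1..n}" using flipset_sub_bound v C by blast
    show ?thesis
    proof (rule ball_iff)
      fix i assume "i \<in> C"
      then have i: "i \<in> {1..n}" using C by auto
      show "(\<not> reorient F (Phi n f) u (flip u i)) = (if i = n then (n \<in> u) = (f (u - {n}) \<noteq> (n \<in> F)) else (i \<in> u) \<noteq> (i \<in> F))"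
        using Q_char[OF u i n, of F f] by (cases "i = n") auto
    qed
  qed
  then show ?thesis unfolding is_sink_in_def subcube_iff by blast
qed

lemma source_char:
  assumes v: "v \<subseteq> {1..n}" and C: "C \<subseteq> {1..n}" and n: "2 \<le> n"
  shows "is_source_in (reorient F (Phi n f)) v C u \<longleftrightarrow> flipset v u \<subseteq> C \<and>
    (\<forall>i\<in>C. if i = n then (n \<in> u) \<noteq> (f (u - {n}) \<noteq> (n \<in> F)) else (i \<in> u) = (i \<in> F))"
proof -
  have "flipset v u \<subseteq> C \<Longrightarrow> (\<forall>i\<in>C. \<not> reorient F (Phi n f) (flip u i) u) \<longleftrightarrow>
    (\<forall>i\<in>C. if i = n then (n \<in> u) \<noteq> (f (u - {n}) \<noteq> (n \<in> F)) else (i \<in> u) = (i \<in> F))"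
  proof -
    assume "flipset v u \<subseteq> C"
    then have u: "u \<subseteq> {1..n}" using flipset_sub_bound v C by blast
    have "\<And>i. i \<in> C \<Longrightarrow> reorient F (Phi n f) (flip u i) u \<longleftrightarrow>
       (if i = n then (n \<notin> u) \<noteq> (f (u - {n}) \<noteq> (n \<in> F)) else (i \<notin> u) = (i \<in> F))"
    proof -
      fix i assume i: "i \<in> C"
      then have i': "i \<in> {1..n}" using C by auto
      have fu: "flip u i \<subseteq> {1..n}" using flip_sub[OF u i'] .
      have "reorient F (Phi n f) (flip u i) u = reorient F (Phi n f) (flip u i) (flip (flip u i) i)" by simp
      also have "\<dots> \<longleftrightarrow> (if i = n then (n \<notin> u) \<noteq> (f (u - {n}) \<noteq> (n \<in> F)) else (i \<notin> u) = (i \<in> F))"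
        using Q_char[OF fu i' n, of F f] by (cases "i = n") auto
      finally show "reorient F (Phi n f) (flip u i) u \<longleftrightarrow>
       (if i = n then (n \<notin> u) \<noteq> (f (u - {n}) \<noteq> (n \<in> F)) else (i \<notin> u) = (i \<in> F))" .
    qed
    then show ?thesis by (intro ball_iff) auto
  qed
  then show ?thesis unfolding is_source_in_def subcube_iff by blast
qed

lemma USO_Phi:
  assumes n: "2 \<le> n"
  shows "USO n (Phi n f)"
  unfolding USO_def
proof (intro conjI allI impI)
  have o1: "\<forall>v w. Phi n f v w \<longrightarrow> v \<subseteq> {1..n} \<and> (\<exists>i\<in>{1..n}. w = flip v i)"
  proof (intro allI impI)
    fix v w assume "Phi n f v w"
    then show "v \<subseteq> {1..n} \<and> (\<exists>i\<in>{1..n}. w = flip v i)"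
      unfolding Phi_def using n by fastforce
  qed
  have o2: "\<forall>v. v \<subseteq> {1..n} \<longrightarrow> (\<forall>i\<in>{1..n}. Phi n f v (flip v i) \<noteq> Phi n f (flip v i) v)"
  proof (intro allI impI ballI)
    fix v i assume v: "v \<subseteq> {1..n}" and i: "i \<in> {1..n}"
    have fv: "flip v i \<subseteq> {1..n}" using flip_sub[OF v i] .
    have "Phi n f (flip v i) v = Phi n f (flip v i) (flip (flip v i) i)" by simp
    then show "Phi n f v (flip v i) \<noteq> Phi n f (flip v i) v"
      using Phi_char[OF v i n, of f] Phi_char[OF fv i n, of f]
      by (cases "i = n") auto
  qed
  show "is_orientation n (Phi n f)"
    unfolding is_orientation_def using o1 o2 by blast
next
  fix v C assume v: "v \<subseteq> {1..n}" and C: "C \<subseteq> {1..n}"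
  have sc: "is_sink_in (Phi n f) v C u \<longleftrightarrow> flipset v u \<subseteq> C \<and>
    (\<forall>i\<in>C. if i = n then (n \<in> u) = f (u - {n}) else i \<in> u)" for u
    using sink_char[OF v C n, of "{}" f u] by simp
  define u1 where "u1 = v \<union> (C - {n})"
  define u where "u = (if n \<in> C \<and> (n \<in> u1) \<noteq> f (u1 - {n}) then flip u1 n else u1)"
  have "is_sink_in (Phi n f) v C u"
    unfolding sc
  proof
    show "flipset v u \<subseteq> C" unfolding u_def u1_def by auto
    have "u - {n} = u1 - {n}" unfolding u_def by auto
    then show "\<forall>i\<in>C. if i = n then (n \<in> u) = f (u - {n}) else i \<in> u"
      unfolding u_def u1_def by auto
  qed
  moreover have "w1 = w2" if "is_sink_in (Phi n f) v C w1" "is_sink_in (Phi n f) v C w2" for w1 w2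
  proof -
    have a: "flipset v w1 \<subseteq> C" "flipset v w2 \<subseteq> C"
      and b: "\<forall>i\<in>C. if i = n then (n \<in> w1) = f (w1 - {n}) else i \<in> w1"
             "\<forall>i\<in>C. if i = n then (n \<in> w2) = f (w2 - {n}) else i \<in> w2"
      using that sc by auto
    have c: "x \<in> w1 \<longleftrightarrow> x \<in> w2" if "x \<noteq> n" for x
    proof (cases "x \<in> C")
      case True then show ?thesis using b that by force
    next
      case False
      have "x \<notin> flipset v w1" "x \<notin> flipset v w2" using a False by auto
      then show ?thesis by simp
    qed
    then have d: "w1 - {n} = w2 - {n}" by auto
    have "n \<in> w1 \<longleftrightarrow> n \<in> w2"
    proof (cases "n \<in> C")
      case True then show ?thesis using b d by force
    next
      case False
      have "n \<notin> flipset v w1" "n \<notin> flipset v w2" using a False by auto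
      then show ?thesis by simp
    qed
    show ?thesis
    proof (rule set_eqI)
      fix x show "x \<in> w1 \<longleftrightarrow> x \<in> w2" using c \<open>n \<in> w1 \<longleftrightarrow> n \<in> w2\<close> by (cases "x = n") auto
    qed
  qed
  ultimately show "\<exists>!u. is_sink_in (Phi n f) v C u" by blast
qed

lemma acyclic_Phi:
  assumes n: "2 \<le> n"
  shows "acyclic_orientation (Phi n f)"
proof -
  define g where "g v = 2 * card (v - {n}) + (if (n \<in> v) = f (v - {n}) then 1 else 0)" for v
  have "{(v, w). Phi n f v w} \<subseteq> measure g"
  proof
    fix p assume "p \<in> {(v, w). Phi n f v w}"
    then obtain w v where p: "p = (v, w)" and P: "Phi n f v w" by auto
    have v: "v \<subseteq> {1..n}" and fin: "finite (v - {n})" using P unfolding Phi_def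
      using finite_subset by auto
    have "g v < g w"
      using P unfolding Phi_def
    proof (elim conjE disjE bexE)
      fix i assume i: "i \<in> {1..n - 1}" and w: "w = flip v i" and iv: "i \<notin> v"
      then have "w - {n} = insert i (v - {n})" "i \<notin> v - {n}" by auto
      then have "card (w - {n}) = Suc (card (v - {n}))" using fin by simp
      then show ?thesis unfolding g_def by auto
    next
      assume w0: "w = flip v n" and w1: "(n \<in> v) \<noteq> f (v - {n})"
      note w = w0 w1
      then have "w - {n} = v - {n}" by auto
      then show ?thesis unfolding g_def using w by auto
    qed
    then show "p \<in> measure g" using p by simp
  qed
  then have "wf ({(v, w). Phi n f v w})" using wf_subset by blast
  then have "acyclic ({(v, w). Phi n f v w})" by (rule wf_acyclic)
  then show ?thesis unfolding acyclic_orientation_def by simp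
qed

lemma LU_Phi:
  assumes n: "2 \<le> n" and mono: "monotone_bool (n - 1) f"
  shows "locally_uniform n (Phi n f)"
  unfolding locally_uniform_def
proof (intro allI impI)
  fix u i j assume u: "u \<subseteq> {1..n}" and i: "i \<in> {1..n}" and j: "j \<in> {1..n}" and ij: "i \<noteq> j"
    and iu: "i \<notin> u" and ju: "j \<notin> u"
  have ui: "flip u i \<subseteq> {1..n}" using flip_sub[OF u i] .
  have uj: "flip u j \<subseteq> {1..n}" using flip_sub[OF u j] .
  have e1: "flipset u {i, j} = flip (flip u i) j" "flipset u {i, j} = flip (flip u j) i" using ij by auto
  have uij: "flipset u {i, j} \<subseteq> {1..n}" using e1 flip_sub[OF ui j] by simp
  have e2: "flip (flipset u {i, j}) i = flip u j" "flip (flipset u {i, j}) j = flip u i" using ij by auto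
  have m: "f x \<Longrightarrow> f (insert k x)" if "x \<subseteq> {1..n}" "n \<notin> x" "k \<in> {1..n}" "k \<noteq> n" for x k
  proof -
    have "insert k x \<subseteq> {1..n-1}"
    proof (rule subsetI)
      fix t assume "t \<in> insert k x"
      then have "t \<in> {1..n}" "t \<noteq> n" using that by auto
      then show "t \<in> {1..n-1}" by auto
    qed
    moreover have "x \<subseteq> insert k x" by auto
    ultimately show "f x \<Longrightarrow> f (insert k x)" using mono unfolding monotone_bool_def by blast
  qed
  note c = Phi_char[OF u i n, of f] Phi_char[OF u j n, of f]
    Phi_char[OF ui j n, of f] Phi_char[OF uj i n, of f]
    Phi_char[OF ui i n, of f] Phi_char[OF uj j n, of f]
  have un: "n \<in> u \<Longrightarrow> False" if "i = n \<or> j = n" using that iu ju by auto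
  have p1: "Phi n f u (flip u i) \<and> Phi n f u (flip u j) \<longrightarrow>
       Phi n f (flip u i) (flipset u {i, j}) \<and> Phi n f (flip u j) (flipset u {i, j})"
  proof
    assume a: "Phi n f u (flip u i) \<and> Phi n f u (flip u j)"
    show "Phi n f (flip u i) (flipset u {i, j}) \<and> Phi n f (flip u j) (flipset u {i, j})"
    proof (cases "i = n \<or> j = n")
      case False
      have "Phi n f (flip u i) (flip (flip u i) j)" using c False ij ju by simp
      moreover have "Phi n f (flip u j) (flip (flip u j) i)" using c False ij iu by simp
      ultimately show ?thesis using e1 by simp
    next
      case True
      then have nu: "n \<notin> u" using un by blast
      have un: "u - {n} = u" using nu by auto
      show ?thesis
      proof (cases "i = n")
        case True
        then have jn: "j \<noteq> n" using ij by auto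
        have fu: "f u" using a c True un nu by simp
        have e3: "flip u j - {n} = insert j u" using True nu ij ju by auto
        have "Phi n f (flip u i) (flip (flip u i) j)" using c True jn ju ij by simp
        moreover have "Phi n f (flip u j) (flip (flip u j) i)"
          using c True jn e3 m[OF u nu j jn fu] nu by simp
        ultimately show ?thesis using e1 by simp
      next
        case False
        then have jn: "j = n" using True by auto
        have fu: "f u" using a c jn un nu by simp
        have e3: "flip u i - {n} = insert i u" using jn nu ij iu by auto
        have "Phi n f (flip u j) (flip (flip u j) i)" using c False jn iu ij by simp
        moreover have "Phi n f (flip u i) (flip (flip u i) j)"
          using c False jn e3 m[OF u nu i False fu] nu by simp
        ultimately show ?thesis using e1 by simp
      qed
    qed
  qed
  have p2: "Phi n f (flip u i) u \<and> Phi n f (flip u j) u \<longrightarrow>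
       Phi n f (flipset u {i, j}) (flip u i) \<and> Phi n f (flipset u {i, j}) (flip u j)"
  proof
    assume a: "Phi n f (flip u i) u \<and> Phi n f (flip u j) u"
    have "Phi n f (flip u i) u = Phi n f (flip u i) (flip (flip u i) i)" by simp
    moreover have "Phi n f (flip u j) u = Phi n f (flip u j) (flip (flip u j) j)" by simp
    ultimately have False using a c ij iu ju by (auto split: if_splits)
    then show "Phi n f (flipset u {i, j}) (flip u i) \<and> Phi n f (flipset u {i, j}) (flip u j)" ..
  qed
  from p1 p2 show "(Phi n f u (flip u i) \<and> Phi n f u (flip u j) \<longrightarrow>
       Phi n f (flip u i) (flipset u {i, j}) \<and> Phi n f (flip u j) (flipset u {i, j})) \<and>
      (Phi n f (flip u i) u \<and> Phi n f (flip u j) u \<longrightarrow>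
       Phi n f (flipset u {i, j}) (flip u i) \<and> Phi n f (flipset u {i, j}) (flip u j))" by (rule conjI)
qed

lemma distinct_Phi:
  assumes n: "2 \<le> n" and x: "x \<subseteq> {1..n-1}" and fg: "f x \<noteq> g x"
  shows "Phi n f \<noteq> Phi n g"
proof
  assume e: "Phi n f = Phi n g"
  have xn: "x \<subseteq> {1..n}" "n \<notin> x" "x - {n} = x" using x n by (force simp: subset_iff)+
  have "n \<in> {1..n}" using n by auto
  from Phi_char[OF xn(1) this n, of f] Phi_char[OF xn(1) this n, of g] e xn fg
  show False by simp
qed


lemma mod_cancel_add:
  fixes a x y m :: nat
  assumes "x < m" "y < m" "(a + x) mod m = (a + y) mod m"
  shows "x = y"
proof -
  have *: "x = y" if "x \<le> y" "x < m" "y < m" "(a + x) mod m = (a + y) mod m" for x y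
  proof -
    have "m dvd (a + y) - (a + x)" using that mod_eq_dvd_iff_nat[of "a + x" "a + y" m] by simp
    then have "m dvd y - x" by simp
    moreover have "y - x < m" using that by simp
    ultimately have "y - x = 0"
    proof -
      assume a: "m dvd y - x" "y - x < m"
      show "y - x = 0"
      proof (rule ccontr)
        assume "y - x \<noteq> 0"
        then have "m \<le> y - x" using dvd_imp_le a(1) by simp
        then show False using a(2) by simp
      qed
    qed
    then show ?thesis using that by simp
  qed
  show ?thesis
  proof (cases "x \<le> y")
    case True then show ?thesis using * assms by blast
  next
    case False then show ?thesis using *[of y x] assms by simp
  qed
qed

locale rotl =
  fixes xs :: "nat list" and n :: nat
  assumes dxs: "distinct xs" and nxs: "n \<notin> set xs"
begin

abbreviation "m \<equiv> length xs"

definition J where "J r k = set (take k (rotate r xs))"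

lemma J0[simp]: "J r 0 = {}" by (simp add: J_def)

lemma J_fin[simp]: "finite (J r k)" by (simp add: J_def)

lemma J_card: "k \<le> m \<Longrightarrow> card (J r k) = k"
  unfolding J_def using dxs by (simp add: distinct_card)

lemma J_full: "J r m = set xs" by (simp add: J_def)

lemma J_sub: "J r k \<subseteq> set xs"
  unfolding J_def by (metis set_rotate set_take_subset)

lemma J_n: "n \<notin> J r k" using J_sub nxs by blast

lemma J_Suc: "k < m \<Longrightarrow> J r (Suc k) = insert (rotate r xs ! k) (J r k)"
  unfolding J_def by (simp add: take_Suc_conv_app_nth)

lemma J_nth_notin: "k < m \<Longrightarrow> rotate r xs ! k \<notin> J r k"
proof -
  assume k: "k < m"
  have "distinct (take (Suc k) (rotate r xs))" using dxs by simp
  then show ?thesis unfolding J_def using k by (simp add: take_Suc_conv_app_nth)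
qed

lemma rot_nth_in: "k < m \<Longrightarrow> rotate r xs ! k \<in> set xs"
  by (metis length_rotate nth_mem set_rotate)

lemma J_char: "k \<le> m \<Longrightarrow> J r k = (\<lambda>j. xs ! ((r + j) mod m)) ` {0..<k}"
proof -
  assume k: "k \<le> m"
  have "J r k = nth (rotate r xs) ` {0..<k}"
    unfolding J_def using k by (simp add: nth_image)
  also have "\<dots> = (\<lambda>j. xs ! ((r + j) mod m)) ` {0..<k}"
    using k by (intro image_cong) (auto simp: nth_rotate)
  finally show ?thesis .
qed

lemma J_uniq:
  assumes r: "r < m" and r': "r' < m" and k0: "0 < k" and km: "k < m" and e: "J r k = J r' k"
  shows "r = r'"
proof (rule ccontr)
  assume ne: "r \<noteq> r'"
  have jc: "\<And>r. J r k = (\<lambda>j. xs ! ((r + j) mod m)) ` {0..<k}" using J_char km by simp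
  have "xs ! r' \<in> J r' k" unfolding jc using k0 r' by (intro image_eqI[of _ _ 0]) simp_all
  then have "xs ! r' \<in> J r k" using e by simp
  then obtain j where j: "j < k" and ej: "xs ! r' = xs ! ((r + j) mod m)" unfolding jc by auto
  have mpos: "0 < m" using r by linarith
  have rj: "r' = (r + j) mod m"
    using ej dxs r' mpos by (simp add: nth_eq_iff_index_eq)
  have j0: "j \<noteq> 0"
  proof
    assume "j = 0" then show False using rj r ne by simp
  qed
  define q where "q = (r + k) mod m"
  have "xs ! q \<notin> J r k"
  proof
    assume "xs ! q \<in> J r k"
    then obtain j' where j': "j' < k" and ej': "xs ! q = xs ! ((r + j') mod m)" unfolding jc by auto
    then have "q = (r + j') mod m" using dxs mpos unfolding q_def by (simp add: nth_eq_iff_index_eq)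
    then have "k = j'" using mod_cancel_add[of k m j' r] km j' unfolding q_def by simp
    then show False using j' by simp
  qed
  moreover have "xs ! q \<in> J r' k"
  proof -
    have "(r' + (k - j)) mod m = (r + j + (k - j)) mod m" unfolding rj by (simp add: mod_add_left_eq)
    also have "\<dots> = q" unfolding q_def using j by simp
    finally have "xs ! q = xs ! ((r' + (k - j)) mod m)" by simp
    moreover have "k - j < k" using j0 j by simp
    ultimately show ?thesis unfolding jc by (intro image_eqI[of _ _ "k - j"]) auto
  qed
  ultimately show False using e by simp
qed

lemma J_one: "r < m \<Longrightarrow> J r 1 = {xs ! r}"
proof -
  assume r: "r < m"
  then have "0 < m" by linarith
  then show ?thesis using J_Suc[of 0 r] r by (simp add: nth_rotate)
qed

lemma J_last:
  assumes "0 < r" "r < m"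
  shows "J r (m - 1) = set xs - {xs ! (r - 1)}"
proof -
  have m1: "m - 1 < m" using assms by simp
  have a: "J r m = insert (rotate r xs ! (m - 1)) (J r (m - 1))"
  proof -
    have e: "Suc (m - 1) = m" using assms by linarith
    show ?thesis using J_Suc[OF m1, of r] unfolding e .
  qed
  have b: "rotate r xs ! (m - 1) \<notin> J r (m - 1)" using J_nth_notin[OF m1] .
  have c: "rotate r xs ! (m - 1) = xs ! (r - 1)"
  proof -
    have "r + (m - 1) = r - 1 + m" using assms by linarith
    then have "(r + (m - 1)) mod m = (r - 1 + m) mod m" by simp
    also have "\<dots> = (r - 1) mod m" by (rule mod_add_self2)
    also have "\<dots> = r - 1" using assms by simp
    finally have h2: "(r + (m - 1)) mod m = r - 1" .
    have h1: "rotate r xs ! (m - 1) = xs ! ((r + (m - 1)) mod m)" by (rule nth_rotate[OF m1])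
    show ?thesis using h1 h2 by metis
  qed
  show ?thesis using a b c J_full by auto
qed

end


declare upt_Suc[simp del]

context rotl begin

lemma J_eq_card: "j \<le> m \<Longrightarrow> j' \<le> m \<Longrightarrow> J r j = J r' j' \<Longrightarrow> j = j'"
  using J_card by metis

lemma J_ins_eq: "insert n (J r j) = insert n (J r' j') \<Longrightarrow> J r j = J r' j'"
  using J_n by (metis insert_ident)

definition RA where "RA r = map (J r) [0..<Suc m]"

lemma RA_len[simp]: "length (RA r) = Suc m" by (simp add: RA_def)

lemma RA_nth: "k \<le> m \<Longrightarrow> RA r ! k = J r k"
  unfolding RA_def by (simp del: upt_Suc add: nth_map_upt)

lemma RA_set: "Z \<in> set (RA r) \<longleftrightarrow> (\<exists>k\<le>m. Z = J r k)"
  unfolding RA_def by (auto simp: image_iff less_Suc_eq_le)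

lemma RA_ne: "RA r \<noteq> []" by (simp add: RA_def del: upt_Suc)

lemma RA_hd: "hd (RA r) = {}"
  using RA_ne RA_nth[of 0 r] by (simp add: hd_conv_nth)

lemma RA_last: "last (RA r) = set xs"
  using RA_ne RA_nth[of m r] by (simp add: last_conv_nth J_full)

lemma RA_distinct: "distinct (RA r)"
  unfolding distinct_conv_nth
proof (intro allI impI)
  fix i j assume "i < length (RA r)" "j < length (RA r)" "i \<noteq> j"
  then show "RA r ! i \<noteq> RA r ! j" using RA_nth J_card by (metis RA_len less_Suc_eq_le)
qed

lemma RA_sub: "set (RA r) \<subseteq> Pow (set xs)"
  using RA_set J_sub by blast

lemma RA_non: "Z \<in> set (RA r) \<Longrightarrow> n \<notin> Z"
  using RA_set J_n by blast

lemma RA_step: "Suc k < length (RA r) \<Longrightarrow> \<exists>i\<in>set xs. i \<notin> RA r ! k \<and> RA r ! Suc k = insert i (RA r ! k)"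
proof -
  assume "Suc k < length (RA r)"
  then have k: "k < m" by simp
  show ?thesis using RA_nth[of k r] RA_nth[of "Suc k" r] k J_Suc[OF k, of r] J_nth_notin[OF k, of r]
      rot_nth_in[OF k, of r] by auto
qed

lemma RA_one: "r < m \<Longrightarrow> RA r ! 1 = {xs ! r}"
  using RA_nth[of 1 r] J_one[of r] by simp

lemma RA_disj:
  assumes "r < m" "r' < m" "r \<noteq> r'"
  shows "set (RA r) \<inter> set (RA r') \<subseteq> {{}, set xs}"
proof
  fix Z assume "Z \<in> set (RA r) \<inter> set (RA r')"
  then obtain k k' where k: "k \<le> m" "Z = J r k" and k': "k' \<le> m" "Z = J r' k'" using RA_set by auto
  then have kk: "k = k'" using J_eq_card by metis
  show "Z \<in> {{}, set xs}"
  proof (cases "k = 0 \<or> k = m")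
    case True then show ?thesis using k J_full by auto
  next
    case False
    then have "r = r'" using J_uniq[of r r' k] assms k k' kk by auto
    then show ?thesis using assms by simp
  qed
qed

definition SA where "SA = {} # map (\<lambda>j. insert n (J 0 j)) [0..<Suc m] @ [set xs]"

lemma SA_len[simp]: "length SA = m + 3" by (simp add: SA_def del: upt_Suc)

lemma SA_nth: "k < m + 3 \<Longrightarrow> SA ! k = (if k = 0 then {} else if k \<le> m + 1 then insert n (J 0 (k - 1)) else set xs)"
proof -
  assume k: "k < m + 3"
  show ?thesis
  proof (cases k)
    case 0 then show ?thesis by (simp add: SA_def)
  next
    case (Suc k1)
    have "SA ! k = (map (\<lambda>j. insert n (J 0 j)) [0..<Suc m] @ [set xs]) ! k1"
      unfolding SA_def Suc by simp
    also have "\<dots> = (if k1 \<le> m then insert n (J 0 k1) else set xs)"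
      using k Suc by (auto simp: nth_append simp del: upt_Suc)
    finally show ?thesis using Suc by simp
  qed
qed

lemma SA_set: "Z \<in> set SA \<longleftrightarrow> Z = {} \<or> Z = set xs \<or> (\<exists>k\<le>m. Z = insert n (J 0 k))"
  unfolding SA_def by (auto simp: image_iff less_Suc_eq_le)

lemma SA_hd: "hd SA = {}" by (simp add: SA_def)

lemma SA_last: "last SA = set xs" by (simp add: SA_def)

lemma SA_distinct: "0 < m \<Longrightarrow> distinct SA"
proof -
  assume m: "0 < m"
  have d1: "distinct (map (\<lambda>j. insert n (J 0 j)) [0..<Suc m])"
  proof (rule distinct_map[THEN iffD2], intro conjI)
    show "distinct [0..<Suc m]" by simp
    show "inj_on (\<lambda>j. insert n (J 0 j)) (set [0..<Suc m])"
    proof (rule inj_onI)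
      fix x y assume "x \<in> set [0..<Suc m]" "y \<in> set [0..<Suc m]" "insert n (J 0 x) = insert n (J 0 y)"
      then show "x = y" using J_ins_eq J_eq_card by (metis atLeastLessThan_iff less_Suc_eq_le set_upt)
    qed
  qed
  have "set xs \<noteq> {}" using m by auto
  moreover have "set xs \<notin> set (map (\<lambda>j. insert n (J 0 j)) [0..<Suc m])" using nxs by (auto simp del: upt_Suc)
  ultimately show ?thesis using d1 unfolding SA_def by (auto simp del: upt_Suc)
qed

lemma SA_sub: "set SA \<subseteq> Pow (insert n (set xs))"
  using SA_set J_sub by blast

lemma SA_one: "SA ! 1 = {n}"
  using SA_nth[of 1] by simp

lemma SA_RA_disj: "set (RA r) \<inter> set SA \<subseteq> {{}, set xs}"
  using RA_non SA_set by blast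

lemma SA_step_mid:
  assumes "1 \<le> k" "k \<le> m"
  shows "\<exists>i\<in>set xs. i \<notin> SA ! k \<and> SA ! Suc k = insert i (SA ! k) \<and> n \<in> SA ! k"
proof -
  have k: "k - 1 < m" using assms by simp
  have a: "SA ! k = insert n (J 0 (k - 1))" using SA_nth[of k] assms by simp
  have b: "SA ! Suc k = insert n (J 0 (Suc (k - 1)))" using SA_nth[of "Suc k"] assms by simp
  show ?thesis unfolding a b using J_Suc[OF k, of 0] J_nth_notin[OF k, of 0] rot_nth_in[OF k, of 0] nxs
    by auto
qed

lemma SA_step0: "SA ! 0 = {} \<and> SA ! Suc 0 = {n}"
  using SA_one by (simp add: SA_def)

lemma SA_step_last: "SA ! (m + 1) = insert n (set xs) \<and> SA ! Suc (m + 1) = set xs"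
  using SA_nth[of "m + 1"] SA_nth[of "Suc (m + 1)"] J_full by simp

definition LB where "LB r p = map (\<lambda>j. if j \<le> p then J r j else insert n (J r (j - 1))) [0..<m+2]"

lemma LB_len[simp]: "length (LB r p) = m + 2" by (simp add: LB_def)

lemma LB_nth: "j < m + 2 \<Longrightarrow> LB r p ! j = (if j \<le> p then J r j else insert n (J r (j - 1)))"
  unfolding LB_def by (simp add: nth_map_upt)

lemma LB_set:
  assumes "p \<le> m"
  shows "Z \<in> set (LB r p) \<longleftrightarrow> (\<exists>j\<le>p. Z = J r j) \<or> (\<exists>j. p \<le> j \<and> j \<le> m \<and> Z = insert n (J r j))"
proof
  assume "Z \<in> set (LB r p)"
  then obtain j where j: "j < m + 2" "Z = (if j \<le> p then J r j else insert n (J r (j - 1)))"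
    unfolding LB_def by (auto simp: image_iff)
  show "(\<exists>j\<le>p. Z = J r j) \<or> (\<exists>j. p \<le> j \<and> j \<le> m \<and> Z = insert n (J r j))"
  proof (cases "j \<le> p")
    case True then show ?thesis using j by auto
  next
    case False then show ?thesis using j by (intro disjI2 exI[of _ "j - 1"]) auto
  qed
next
  assume "(\<exists>j\<le>p. Z = J r j) \<or> (\<exists>j. p \<le> j \<and> j \<le> m \<and> Z = insert n (J r j))"
  then show "Z \<in> set (LB r p)"
  proof
    assume "\<exists>j\<le>p. Z = J r j"
    then obtain j where "j \<le> p" "Z = J r j" by auto
    then show ?thesis unfolding LB_def using assms by (auto intro!: image_eqI[of _ _ j])
  next
    assume "\<exists>j. p \<le> j \<and> j \<le> m \<and> Z = insert n (J r j)"
    then obtain j where "p \<le> j" "j \<le> m" "Z = insert n (J r j)" by auto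
    then show ?thesis unfolding LB_def using assms by (auto intro!: image_eqI[of _ _ "Suc j"])
  qed
qed

lemma LB_card: "p \<le> m \<Longrightarrow> j < m + 2 \<Longrightarrow> card (LB r p ! j) = j"
  using LB_nth[of j r p] J_card J_n by (auto simp: card_insert_if)

lemma LB_distinct: "p \<le> m \<Longrightarrow> distinct (LB r p)"
  unfolding distinct_conv_nth using LB_card by (metis LB_len)

lemma LB_hd: "hd (LB r p) = {}"
  using LB_nth[of 0 r p] by (simp add: hd_conv_nth LB_def)

lemma LB_last: "p \<le> m \<Longrightarrow> last (LB r p) = insert n (set xs)"
  using LB_nth[of "m + 1" r p] J_full by (simp add: last_conv_nth LB_def)

lemma LB_ne: "LB r p \<noteq> []" by (simp add: LB_def)

lemma LB_sub: "p \<le> m \<Longrightarrow> set (LB r p) \<subseteq> Pow (insert n (set xs))"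
  using LB_set J_sub by blast

lemma LB_one: "0 < m \<Longrightarrow> r < m \<Longrightarrow> LB r p ! 1 = (if p = 0 then {n} else {xs ! r})"
  using LB_nth[of 1 r p] J_one[of r] by auto

lemma LB_step:
  assumes p: "p \<le> m" and k: "Suc k < m + 2"
  shows "(\<exists>i\<in>set xs. i \<notin> LB r p ! k \<and> LB r p ! Suc k = insert i (LB r p ! k)) \<or>
         (k = p \<and> LB r p ! k = J r p \<and> LB r p ! Suc k = insert n (J r p))"
proof -
  have a: "LB r p ! k = (if k \<le> p then J r k else insert n (J r (k - 1)))" using LB_nth k by simp
  have b: "LB r p ! Suc k = (if Suc k \<le> p then J r (Suc k) else insert n (J r k))" using LB_nth k by simp
  consider "k < p" | "k = p" | "p < k" by linarith
  then show ?thesis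
  proof cases
    case 1
    then have km: "k < m" using p by simp
    show ?thesis using 1 a b J_Suc[OF km, of r] J_nth_notin[OF km, of r] rot_nth_in[OF km, of r] by auto
  next
    case 2 then show ?thesis using a b by auto
  next
    case 3
    then have km: "k - 1 < m" using k by simp
    have e: "Suc (k - 1) = k" using 3 by simp
    show ?thesis using 3 a b J_Suc[OF km, of r] J_nth_notin[OF km, of r] rot_nth_in[OF km, of r] nxs
      unfolding e by auto
  qed
qed

lemma LB_disj:
  assumes r: "r < m" "r' < m" and p: "p \<le> m" "p' \<le> m"
    and H1: "\<not> (p = m \<and> p' = m)" and H2: "\<not> (p = 0 \<and> p' = 0)"
    and H3: "r = r' \<Longrightarrow> (p = 0 \<and> p' = m) \<or> (p = m \<and> p' = 0)"
  shows "set (LB r p) \<inter> set (LB r' p') \<subseteq> {{}, insert n (set xs)}"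
proof
  fix Z assume Z: "Z \<in> set (LB r p) \<inter> set (LB r' p')"
  have A: "(\<exists>j\<le>p. Z = J r j) \<or> (\<exists>j. p \<le> j \<and> j \<le> m \<and> Z = insert n (J r j))"
    using Z LB_set[OF p(1)] by blast
  have B: "(\<exists>j\<le>p'. Z = J r' j) \<or> (\<exists>j. p' \<le> j \<and> j \<le> m \<and> Z = insert n (J r' j))"
    using Z LB_set[OF p(2)] by blast
  show "Z \<in> {{}, insert n (set xs)}"
  proof (cases "n \<in> Z")
    case False
    then obtain j j' where j: "j \<le> p" "Z = J r j" and j': "j' \<le> p'" "Z = J r' j'" using A B by auto
    then have jj: "j = j'" using J_eq_card p by (metis order_trans)
    show ?thesis
    proof (cases "j = 0")
      case True then show ?thesis using j by simp
    next
      case j0: False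
      have "j \<noteq> m" using H1 j j' jj p by auto
      then have "j < m" using j p by simp
      then have "r = r'" using J_uniq[of r r' j] r j0 j j' jj by auto
      then show ?thesis using H3 j j' jj j0 by auto
    qed
  next
    case True
    then obtain j j' where j: "p \<le> j" "j \<le> m" "Z = insert n (J r j)"
      and j': "p' \<le> j'" "j' \<le> m" "Z = insert n (J r' j')" using A B J_n by blast
    then have "J r j = J r' j'" using J_ins_eq by metis
    then have jj: "j = j'" using J_eq_card j j' by metis
    show ?thesis
    proof (cases "j = m")
      case True then show ?thesis using j J_full by simp
    next
      case jm: False
      have "j \<noteq> 0" using H2 j j' jj by auto
      moreover have "j < m" using jm j by simp
      ultimately have "r = r'" using J_uniq[of r r' j] r j j' jj \<open>J r j = J r' j'\<close> by auto
      then show ?thesis using H3 j j' jj jm p by auto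
    qed
  qed
qed

end


lemma flipset_empty[simp]: "flipset s {} = s" by (auto simp: set_eq_iff)

locale hk =
  fixes n :: nat and f :: "nat set \<Rightarrow> bool" and F v C s t :: "nat set"
  assumes n2: "2 \<le> n" and mono: "monotone_bool (n - 1) f"
    and v: "v \<subseteq> {1..n}" and C: "C \<subseteq> {1..n}"
    and src: "is_source_in (reorient F (Phi n f)) v C s"
    and snk: "is_sink_in (reorient F (Phi n f)) v C t"
begin

abbreviation "Q \<equiv> reorient F (Phi n f)"
definition tg where "tg X = (f X \<noteq> (n \<in> F))"
definition C' where "C' = C - {n}"
definition s' where "s' = s - {n}"
definition t' where "t' = t - {n}"

lemma sC: "flipset v s \<subseteq> C"
  and s_prop: "\<forall>i\<in>C. if i = n then (n \<in> s) \<noteq> tg (s - {n}) else (i \<in> s) = (i \<in> F)"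
  using src source_char[OF v C n2, of F f s] unfolding tg_def by auto

lemma tC: "flipset v t \<subseteq> C"
  and t_prop: "\<forall>i\<in>C. if i = n then (n \<in> t) = tg (t - {n}) else (i \<in> t) \<noteq> (i \<in> F)"
  using snk sink_char[OF v C n2, of F f t] unfolding tg_def by auto

lemma s_comb: "i \<in> C' \<Longrightarrow> (i \<in> s) = (i \<in> F)" using s_prop unfolding C'_def by auto
lemma t_comb: "i \<in> C' \<Longrightarrow> (i \<in> t) \<noteq> (i \<in> F)" using t_prop unfolding C'_def by auto
lemma s_n: "n \<in> C \<Longrightarrow> (n \<in> s) \<noteq> tg s'" using s_prop unfolding s'_def by auto
lemma t_n: "n \<in> C \<Longrightarrow> (n \<in> t) = tg t'" using t_prop unfolding t'_def by auto

lemma s_sub: "s \<subseteq> {1..n}" using flipset_sub_bound sC v C by blast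
lemma t_sub: "t \<subseteq> {1..n}" using flipset_sub_bound tC v C by blast

lemma finC: "finite C" using C finite_subset by blast
lemma finC': "finite C'" using finC unfolding C'_def by simp

lemma nC': "n \<notin> C'" unfolding C'_def by simp
lemma C'C: "C' \<subseteq> C" unfolding C'_def by auto

lemma sX: "X \<subseteq> C \<Longrightarrow> flipset s X \<subseteq> {1..n}"
proof
  fix x assume X: "X \<subseteq> C" and "x \<in> flipset s X"
  then have "x \<in> s \<or> x \<in> X" by auto
  then show "x \<in> {1..n}" using s_sub C X by blast
qed

lemma sX_sub: "X \<subseteq> C \<Longrightarrow> flipset s X \<in> subcube v C"
  unfolding subcube_iff
proof
  fix x assume X: "X \<subseteq> C" and x: "x \<in> flipset v (flipset s X)"
  show "x \<in> C"
  proof (rule ccontr)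
    assume "x \<notin> C"
    then have "x \<notin> flipset v s" "x \<notin> X" using sC X by auto
    then show False using x by simp
  qed
qed

lemma Xt_C: "flipset s t \<subseteq> C"
proof
  fix x assume x: "x \<in> flipset s t"
  show "x \<in> C"
  proof (rule ccontr)
    assume "x \<notin> C"
    then have "x \<notin> flipset v s" "x \<notin> flipset v t" using sC tC by auto
    then show False using x by simp
  qed
qed

lemma C'_Xt: "C' \<subseteq> flipset s t"
  using s_comb t_comb by auto

lemma t_eq: "flipset s (flipset s t) = t" by simp

lemma step_comb:
  assumes X: "X \<subseteq> C" and i: "i \<in> C'" and iX: "i \<notin> X"
  shows "Q (flipset s X) (flipset s (insert i X))"
proof -
  have u: "flipset s X \<subseteq> {1..n}" using sX[OF X] .
  have i1: "i \<in> {1..n}" and inn: "i \<noteq> n" using i C unfolding C'_def by auto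
  have e: "flipset s (insert i X) = flip (flipset s X) i" using iX by auto
  show ?thesis unfolding e Q_char[OF u i1 n2] using inn iX s_comb[OF i] by simp
qed

lemma step_nadd:
  assumes X: "X \<subseteq> C" and nC: "n \<in> C" and nX: "n \<notin> X" and g: "tg (flipset s X - {n}) \<noteq> (n \<in> s)"
  shows "Q (flipset s X) (flipset s (insert n X))"
proof -
  have u: "flipset s X \<subseteq> {1..n}" using sX[OF X] .
  have i1: "n \<in> {1..n}" using n2 by auto
  have e: "flipset s (insert n X) = flip (flipset s X) n" using nX by auto
  show ?thesis unfolding e Q_char[OF u i1 n2] using nX g unfolding tg_def by auto
qed

lemma step_ndel:
  assumes X: "X \<subseteq> C" and nX: "n \<in> X" and g: "tg (flipset s X - {n}) = (n \<in> s)"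
  shows "Q (flipset s X) (flipset s (X - {n}))"
proof -
  have u: "flipset s X \<subseteq> {1..n}" using sX[OF X] .
  have i1: "n \<in> {1..n}" using n2 by auto
  have e: "flipset s (X - {n}) = flip (flipset s X) n" using nX by auto
  show ?thesis unfolding e Q_char[OF u i1 n2] using nX g unfolding tg_def by auto
qed

lemma dipath_map:
  assumes "L \<noteq> []" "hd L = {}" "flipset s (last L) = t" "distinct L" "set L \<subseteq> Pow C"
    "\<forall>k. Suc k < length L \<longrightarrow> Q (flipset s (L ! k)) (flipset s (L ! Suc k))"
  shows "dipath_in Q (subcube v C) (map (flipset s) L) s t"
  unfolding dipath_in_def
proof (intro conjI)
  show "map (flipset s) L \<noteq> []" using assms by simp
  show "hd (map (flipset s) L) = s" using assms by (simp add: hd_map)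
  show "last (map (flipset s) L) = t" using assms by (simp add: last_map)
  have "inj_on (flipset s) (set L)" by (rule inj_onI) (simp add: flipset_eq_iff)
  then show "distinct (map (flipset s) L)" using assms by (simp add: distinct_map)
  show "set (map (flipset s) L) \<subseteq> subcube v C" using assms sX_sub by auto
  show "\<forall>k. Suc k < length (map (flipset s) L) \<longrightarrow>
      Q (map (flipset s) L ! k) (map (flipset s) L ! Suc k)" using assms by simp
qed

lemma paths_ok:
  assumes E: "flipset s E = t"
    and P1: "\<And>k. k < card C \<Longrightarrow> L k \<noteq> [] \<and> hd (L k) = {} \<and> last (L k) = E \<and> distinct (L k) \<and>
       set (L k) \<subseteq> Pow C \<and> (\<forall>j. Suc j < length (L k) \<longrightarrow> Q (flipset s (L k ! j)) (flipset s (L k ! Suc j)))"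
    and P2: "\<And>k l. k < card C \<Longrightarrow> l < card C \<Longrightarrow> k \<noteq> l \<Longrightarrow> set (L k) \<inter> set (L l) \<subseteq> {{}, E} \<and> L k \<noteq> L l"
  shows "\<exists>P :: nat \<Rightarrow> nat set list. inj_on P {..<card C} \<and>
           (\<forall>k<card C. dipath_in Q (subcube v C) (P k) s t) \<and>
           (\<forall>k<card C. \<forall>l<card C. k \<noteq> l \<longrightarrow> (set (P k) \<inter> set (P l)) \<subseteq> {s, t})"
proof (intro exI[of _ "\<lambda>k. map (flipset s) (L k)"] conjI allI impI)
  have im: "inj (map (flipset s))"
    by (rule inj_mapI) (rule injI, simp add: flipset_eq_iff)
  show "inj_on (\<lambda>k. map (flipset s) (L k)) {..<card C}"
  proof (rule inj_onI)
    fix k l assume "k \<in> {..<card C}" "l \<in> {..<card C}" "map (flipset s) (L k) = map (flipset s) (L l)"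
    then show "k = l" using P2 im by (meson injD lessThan_iff)
  qed
  fix k assume k: "k < card C"
  show "dipath_in Q (subcube v C) (map (flipset s) (L k)) s t"
    using P1[OF k] E by (intro dipath_map) auto
  fix l assume l: "l < card C" and kl: "k \<noteq> l"
  show "set (map (flipset s) (L k)) \<inter> set (map (flipset s) (L l)) \<subseteq> {s, t}"
  proof
    fix y assume "y \<in> set (map (flipset s) (L k)) \<inter> set (map (flipset s) (L l))"
    then obtain X1 X2 where "X1 \<in> set (L k)" "X2 \<in> set (L l)" "y = flipset s X1" "y = flipset s X2" by auto
    then have "X1 \<in> set (L k) \<inter> set (L l)" "y = flipset s X1" by (auto simp: flipset_eq_iff)
    then show "y \<in> {s, t}" using P2[OF k l kl] E by auto
  qed
qed

end


context hk begin

definition A where "A = (if f s' then C' - F else C' \<inter> F)"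
definition B where "B = (if f s' then C' \<inter> F else C' - F)"
definition sig where "sig = sorted_list_of_set A @ sorted_list_of_set B"

lemma AB: "A \<union> B = C'" "A \<inter> B = {}" "finite A" "finite B"
  unfolding A_def B_def using finC' by auto

lemma sig_distinct: "distinct sig"
  unfolding sig_def using AB by auto

lemma sig_set: "set sig = C'"
  unfolding sig_def using AB by auto

lemma nsig: "n \<notin> set sig" using sig_set nC' by simp

sublocale R: rotl sig n
  by unfold_locales (rule sig_distinct, rule nsig)

lemma sig_len: "length sig = card C'"
  using distinct_card[OF sig_distinct] sig_set by simp

lemma sig_A: "k < card A \<Longrightarrow> sig ! k \<in> A"
proof -
  assume k: "k < card A"
  have "sorted_list_of_set A ! k \<in> set (sorted_list_of_set A)" using k by (intro nth_mem) simp
  then show ?thesis unfolding sig_def using AB k by (simp add: nth_append)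
qed

lemma sig_B: "card A \<le> k \<Longrightarrow> k < length sig \<Longrightarrow> sig ! k \<in> B"
proof -
  assume k: "card A \<le> k" "k < length sig"
  have "length sig = card A + card B" unfolding sig_def by simp
  then have "k - card A < length (sorted_list_of_set B)" using k AB by simp
  then have "sorted_list_of_set B ! (k - card A) \<in> set (sorted_list_of_set B)" by (rule nth_mem)
  then show ?thesis unfolding sig_def using k AB by (simp add: nth_append)
qed

lemma RA_valid:
  assumes "Suc j < length (R.RA r)"
  shows "Q (flipset s (R.RA r ! j)) (flipset s (R.RA r ! Suc j))"
proof -
  obtain i where i: "i \<in> set sig" "i \<notin> R.RA r ! j" "R.RA r ! Suc j = insert i (R.RA r ! j)"
    using R.RA_step[OF assms] by blast
  have "R.RA r ! j \<in> set (R.RA r)" using assms by simp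
  then have X: "R.RA r ! j \<subseteq> C" using R.RA_sub sig_set C'C by blast
  show ?thesis unfolding i(3) using step_comb[OF X _ i(2)] i(1) sig_set by simp
qed

lemma RA_noteq:
  assumes "k < length sig" "2 \<le> length sig"
  shows "R.J k 1 \<in> set (R.RA k) \<and> R.J k 1 \<notin> {{}, set sig}"
proof -
  have c: "card (R.J k 1) = 1" using R.J_card assms by simp
  have "card (set sig) = length sig" using distinct_card[OF sig_distinct] .
  then have "R.J k 1 \<noteq> set sig" using c assms by auto
  moreover have "R.J k 1 \<noteq> {}" using c by auto
  moreover have "R.J k 1 \<in> set (R.RA k)" unfolding R.RA_set using assms by (intro exI[of _ 1]) auto
  ultimately show ?thesis by simp
qed

abbreviation "HKgoal \<equiv> \<exists>P :: nat \<Rightarrow> nat set list. inj_on P {..<card C} \<and>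
           (\<forall>k<card C. dipath_in Q (subcube v C) (P k) s t) \<and>
           (\<forall>k<card C. \<forall>l<card C. k \<noteq> l \<longrightarrow> (set (P k) \<inter> set (P l)) \<subseteq> {s, t})"

lemma case1:
  assumes nC: "n \<notin> C"
  shows HKgoal
proof -
  have CC: "C' = C" using nC unfolding C'_def by auto
  have Xt: "flipset s t = C" using Xt_C C'_Xt CC by auto
  have E: "flipset s (set sig) = t" using Xt sig_set CC by (metis t_eq)
  have cardC: "card C = length sig" using sig_len CC by simp
  show ?thesis
  proof (rule paths_ok[OF E, of R.RA])
    fix k assume k: "k < card C"
    show "R.RA k \<noteq> [] \<and> hd (R.RA k) = {} \<and> last (R.RA k) = set sig \<and> distinct (R.RA k) \<and>
       set (R.RA k) \<subseteq> Pow C \<and> (\<forall>j. Suc j < length (R.RA k) \<longrightarrow> Q (flipset s (R.RA k ! j)) (flipset s (R.RA k ! Suc j)))"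
      using R.RA_ne R.RA_hd R.RA_last R.RA_distinct R.RA_sub sig_set CC RA_valid by auto
  next
    fix k l assume k: "k < card C" and l: "l < card C" and kl: "k \<noteq> l"
    have d: "set (R.RA k) \<inter> set (R.RA l) \<subseteq> {{}, set sig}" using R.RA_disj k l kl cardC by simp
    have "2 \<le> length sig" using k l kl cardC by linarith
    then have "R.RA k \<noteq> R.RA l" using RA_noteq[of k] d k cardC by auto
    with d show "set (R.RA k) \<inter> set (R.RA l) \<subseteq> {{}, set sig} \<and> R.RA k \<noteq> R.RA l" by simp
  qed
qed

lemma Cins: "n \<in> C \<Longrightarrow> C = insert n C'" unfolding C'_def by auto

lemma case2:
  assumes nC: "n \<in> C" and ne: "tg s' \<noteq> tg t'"
  shows HKgoal
proof -
  have nsnt: "(n \<in> s) = (n \<in> t)" using s_n[OF nC] t_n[OF nC] ne by auto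
  have Xt: "flipset s t = C'" using Xt_C C'_Xt nsnt unfolding C'_def by auto
  have E: "flipset s (set sig) = t" using Xt sig_set by (metis t_eq)
  have cardC: "card C = Suc (length sig)"
  proof -
    have "card (insert n C') = Suc (card C')" using nC' finC' by simp
    then show ?thesis using sig_len Cins[OF nC] by simp
  qed
  have m0: "0 < length sig"
  proof (rule ccontr)
    assume "\<not> 0 < length sig"
    then have "set sig = {}" by simp
    then have "t = s" using E by simp
    then show False using ne unfolding s'_def t'_def by simp
  qed
  have Csig: "insert n (set sig) = C" using Cins[OF nC] sig_set by simp
  have SA_valid: "Q (flipset s (R.SA ! j)) (flipset s (R.SA ! Suc j))" if j: "Suc j < length R.SA" for j
  proof -
    consider "j = 0" | "1 \<le> j \<and> j \<le> length sig" | "j = length sig + 1" using j by fastforce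
    then show ?thesis
    proof cases
      case 1
      have "Q (flipset s {}) (flipset s (insert n {}))"
        using step_nadd[of "{}"] nC s_n[OF nC] unfolding s'_def by auto
      then show ?thesis using R.SA_step0 1 by simp
    next
      case 2
      then obtain i where i: "i \<in> set sig" "i \<notin> R.SA ! j" "R.SA ! Suc j = insert i (R.SA ! j)"
        using R.SA_step_mid by blast
      have "R.SA ! j \<in> set R.SA" using j by simp
      then have X: "R.SA ! j \<subseteq> C" using R.SA_sub Csig by blast
      show ?thesis unfolding i(3) using step_comb[OF X _ i(2)] i(1) sig_set by simp
    next
      case 3
      have X: "R.SA ! j = C" "R.SA ! Suc j = C - {n}" using R.SA_step_last 3 Csig nsig by auto
      have e: "flipset s C - {n} = t'" unfolding t'_def using E Cins[OF nC] sig_set by auto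
      have "tg (flipset s C - {n}) = (n \<in> s)" unfolding e using t_n[OF nC] nsnt by simp
      then show ?thesis unfolding X using step_ndel[of C] nC by simp
    qed
  qed
  define L where "L k = (if k < length sig then R.RA k else R.SA)" for k
  show ?thesis
  proof (rule paths_ok[OF E, of L])
    fix k assume k: "k < card C"
    show "L k \<noteq> [] \<and> hd (L k) = {} \<and> last (L k) = set sig \<and> distinct (L k) \<and>
       set (L k) \<subseteq> Pow C \<and> (\<forall>j. Suc j < length (L k) \<longrightarrow> Q (flipset s (L k ! j)) (flipset s (L k ! Suc j)))"
    proof (cases "k < length sig")
      case True
      have "set (R.RA k) \<subseteq> Pow C" using R.RA_sub sig_set C'C by blast
      then show ?thesis unfolding L_def using True
        using R.RA_ne R.RA_hd R.RA_last R.RA_distinct RA_valid by auto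
    next
      case False
      have "R.SA \<noteq> []" by (simp add: R.SA_def)
      then show ?thesis unfolding L_def using False
        R.SA_hd R.SA_last R.SA_distinct[OF m0] R.SA_sub Csig SA_valid by auto
    qed
  next
    fix k l assume k: "k < card C" and l: "l < card C" and kl: "k \<noteq> l"
    have key: "set (L k) \<inter> set (L l) \<subseteq> {{}, set sig} \<and> L k \<noteq> L l"
      if k: "k < length sig" and l: "l < Suc (length sig)" and kl: "k \<noteq> l" for k l
    proof (cases "l < length sig")
      case True
      have d: "set (R.RA k) \<inter> set (R.RA l) \<subseteq> {{}, set sig}" using R.RA_disj k True kl by simp
      have "2 \<le> length sig" using k True kl by linarith
      then have "R.RA k \<noteq> R.RA l" using RA_noteq[of k] d k by auto
      with d show ?thesis unfolding L_def using k True by simp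
    next
      case False
      have "1 < length R.SA" by simp
      then have "R.SA ! 1 \<in> set R.SA" by (rule nth_mem)
      then have "{n} \<in> set R.SA" unfolding R.SA_one .
      moreover have "{n} \<notin> set (R.RA k)" using R.RA_non by blast
      ultimately have "R.RA k \<noteq> R.SA" by auto
      then show ?thesis unfolding L_def using k False R.SA_RA_disj by simp
    qed
    show "set (L k) \<inter> set (L l) \<subseteq> {{}, set sig} \<and> L k \<noteq> L l"
    proof (cases "k < length sig")
      case True then show ?thesis using key[OF True] l kl cardC by simp
    next
      case False
      then have "l < length sig" using k l kl cardC by simp
      then show ?thesis using key[of l k] k kl cardC by (auto simp: Int_commute)
    qed
  qed
qed

lemma mono': "X \<subseteq> Y \<Longrightarrow> Y \<subseteq> {1..n - 1} \<Longrightarrow> f X \<Longrightarrow> f Y"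
  using mono unfolding monotone_bool_def by blast

lemma bound: "Y \<subseteq> {1..n} \<Longrightarrow> n \<notin> Y \<Longrightarrow> Y \<subseteq> {1..n - 1}"
proof
  fix x assume "Y \<subseteq> {1..n}" "n \<notin> Y" "x \<in> Y"
  then have "x \<in> {1..n}" "x \<noteq> n" by auto
  then show "x \<in> {1..n - 1}" by auto
qed

lemma C'_sub: "C' \<subseteq> {1..n}" using C C'C by blast

lemma A_good: "x \<in> A \<Longrightarrow> f (flip s' x) = f s'"
proof -
  assume x: "x \<in> A"
  then have xC: "x \<in> C'" using AB by auto
  then have xn: "x \<noteq> n" using nC' by auto
  have s'b: "s' \<subseteq> {1..n}" "n \<notin> s'" using s_sub unfolding s'_def by auto
  show ?thesis
  proof (cases "f s'")
    case True
    then have "x \<notin> F" using x unfolding A_def by auto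
    then have "x \<notin> s" using s_comb[OF xC] by simp
    then have e: "flip s' x = insert x s'" unfolding s'_def using xn by auto
    have i1: "insert x s' \<subseteq> {1..n}" using s'b xC C'_sub by auto
    have "insert x s' \<subseteq> {1..n - 1}" using bound[OF i1] s'b xn by simp
    then have "f (flip s' x)" unfolding e using mono'[of s' "insert x s'"] True by auto
    then show ?thesis using True by simp
  next
    case False
    then have "x \<in> F" using x unfolding A_def by auto
    then have "x \<in> s" using s_comb[OF xC] by simp
    then have e: "flip s' x = s' - {x}" unfolding s'_def using xn by auto
    have "s' \<subseteq> {1..n - 1}" using bound s'b by auto
    then have "\<not> f (flip s' x)" unfolding e using mono'[of "s' - {x}" s'] False by auto
    then show ?thesis using False by simp
  qed
qed

lemma B_good: "y \<in> B \<Longrightarrow> f t' = f s' \<Longrightarrow> f (flip t' y) = f t'"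
proof -
  assume y: "y \<in> B" and ft: "f t' = f s'"
  then have yC: "y \<in> C'" using AB by auto
  then have yn: "y \<noteq> n" using nC' by auto
  have t'b: "t' \<subseteq> {1..n}" "n \<notin> t'" using t_sub unfolding t'_def by auto
  show ?thesis
  proof (cases "f s'")
    case True
    then have "y \<in> F" using y unfolding B_def by auto
    then have "y \<notin> t" using t_comb[OF yC] by simp
    then have e: "flip t' y = insert y t'" unfolding t'_def using yn by auto
    have i1: "insert y t' \<subseteq> {1..n}" using t'b yC C'_sub by auto
    have "insert y t' \<subseteq> {1..n - 1}" using bound[OF i1] t'b yn by simp
    then have "f (flip t' y)" unfolding e using mono'[of t' "insert y t'"] True ft by auto
    then show ?thesis using True ft by simp
  next
    case False
    then have "y \<notin> F" using y unfolding B_def by auto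
    then have "y \<in> t" using t_comb[OF yC] by simp
    then have e: "flip t' y = t' - {y}" unfolding t'_def using yn by auto
    have "t' \<subseteq> {1..n - 1}" using bound t'b by auto
    then have "\<not> f (flip t' y)" unfolding e using mono'[of "t' - {y}" t'] False ft by auto
    then show ?thesis using False ft by simp
  qed
qed

definition good where "good r p \<longleftrightarrow> tg (flipset s (R.J r p) - {n}) \<noteq> (n \<in> s)"

lemma LB_valid:
  assumes nC: "n \<in> C" and p: "p \<le> length sig" and g: "good r p" and j: "Suc j < length (R.LB r p)"
  shows "Q (flipset s (R.LB r p ! j)) (flipset s (R.LB r p ! Suc j))"
proof -
  have Csig: "insert n (set sig) = C" using Cins[OF nC] sig_set by simp
  have "R.LB r p ! j \<in> set (R.LB r p)" using j by simp
  then have X: "R.LB r p ! j \<subseteq> C" using R.LB_sub[OF p] Csig by blast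
  have "Suc j < length sig + 2" using j by simp
  from R.LB_step[OF p this, of r] show ?thesis
  proof
    assume "\<exists>i\<in>set sig. i \<notin> R.LB r p ! j \<and> R.LB r p ! Suc j = insert i (R.LB r p ! j)"
    then obtain i where i: "i \<in> set sig" "i \<notin> R.LB r p ! j" "R.LB r p ! Suc j = insert i (R.LB r p ! j)"
      by blast
    show ?thesis unfolding i(3) using step_comb[OF X _ i(2)] i(1) sig_set by simp
  next
    assume a: "j = p \<and> R.LB r p ! j = R.J r p \<and> R.LB r p ! Suc j = insert n (R.J r p)"
    have q: "Q (flipset s (R.J r p)) (flipset s (insert n (R.J r p)))"
      using step_nadd[of "R.J r p"] X a nC R.J_n g unfolding good_def by auto
    have "R.LB r p ! j = R.J r p" "R.LB r p ! Suc j = insert n (R.J r p)" using a by auto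
    then show ?thesis using q by simp
  qed
qed

lemma case3:
  assumes nC: "n \<in> C" and eq: "tg s' = tg t'"
  shows HKgoal
proof -
  define m where "m = length sig"
  define a where "a = card A"
  define r0 where "r0 = a mod m"
  define pp where "pp k = (if k = r0 then 0 else if k < a then 1 else m - 1)" for k
  define rr where "rr k = (if k < m then k else r0)" for k
  define qq where "qq k = (if k < m then pp k else m)" for k
  define L where "L k = R.LB (rr k) (qq k)" for k
  have nsnt: "(n \<in> s) \<noteq> (n \<in> t)" using s_n[OF nC] t_n[OF nC] eq by auto
  have Csig: "insert n (set sig) = C" using Cins[OF nC] sig_set by simp
  have Xt: "flipset s t = C"
  proof
    show "flipset s t \<subseteq> C" by (rule Xt_C)
    show "C \<subseteq> flipset s t" using C'_Xt nsnt Cins[OF nC] by auto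
  qed
  have tC: "t = flipset s C" using Xt by (metis t_eq)
  have E: "flipset s (insert n (set sig)) = t" using Csig tC by simp
  have cardC: "card C = Suc m"
  proof -
    have "card (insert n C') = Suc (card C')" using nC' finC' by simp
    then show ?thesis using sig_len Cins[OF nC] unfolding m_def by simp
  qed
  have fts: "f t' = f s'" using eq unfolding tg_def by auto
  have am: "a \<le> m"
  proof -
    have "A \<subseteq> C'" using AB by auto
    then have "card A \<le> card C'" using finC' by (rule card_mono[rotated])
    then show ?thesis unfolding a_def m_def sig_len .
  qed
  have g0: "good r 0" for r
    unfolding good_def using s_n[OF nC] unfolding s'_def by simp
  have gm: "good r m" for r
  proof -
    have "R.J r m = C'" unfolding m_def using R.J_full sig_set by simp
    moreover have "flipset s C' - {n} = t'" unfolding t'_def unfolding tC using Cins[OF nC] nC' by auto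
    ultimately show ?thesis unfolding good_def using s_n[OF nC] eq by simp
  qed
  have g1: "good k 1" if k: "k < a" for k
  proof -
    have km: "k < m" using k am by simp
    have J1: "R.J k 1 = {sig ! k}" using R.J_one km unfolding m_def by simp
    have x: "sig ! k \<in> A" using sig_A k unfolding a_def by simp
    then have xn: "sig ! k \<noteq> n" using AB nC' by auto
    have "flipset s {sig ! k} - {n} = flip s' (sig ! k)" unfolding s'_def using xn by auto
    then show ?thesis unfolding good_def J1 using A_good[OF x] s_n[OF nC] unfolding tg_def by simp
  qed
  have gl: "good k (m - 1)" if k: "0 < k" "k < m" "a \<le> k - 1" for k
  proof -
    have Jl: "R.J k (m - 1) = C' - {sig ! (k - 1)}" using R.J_last[of k] k sig_set unfolding m_def by simp
    have y: "sig ! (k - 1) \<in> B" using sig_B k unfolding a_def m_def by simp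
    then have yC: "sig ! (k - 1) \<in> C'" using AB by auto
    have "flipset s (C' - {sig ! (k - 1)}) - {n} = flip t' (sig ! (k - 1))"
      unfolding t'_def unfolding tC
    proof (rule set_eqI)
      fix z
      have cz: "z \<noteq> n \<Longrightarrow> z \<in> C' \<longleftrightarrow> z \<in> C" unfolding C'_def by simp
      show "z \<in> flipset s (C' - {sig ! (k - 1)}) - {n} \<longleftrightarrow> z \<in> flip (flipset s C - {n}) (sig ! (k - 1))"
        using cz yC nC' by (cases "z = n"; cases "z = sig ! (k - 1)") auto
    qed
    then show ?thesis unfolding good_def Jl using B_good[OF y fts] s_n[OF nC] eq fts
      unfolding tg_def by simp
  qed
  have pk: "pp k \<le> m \<and> good k (pp k) \<and> (k \<noteq> r0 \<longrightarrow> 0 < pp k \<and> pp k < m)" if k: "k < m" for k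
  proof (cases "k = r0")
    case True then show ?thesis unfolding pp_def using g0 by simp
  next
    case False
    have m2: "2 \<le> m"
    proof (rule ccontr)
      assume "\<not> 2 \<le> m"
      then have "m = 1" using k by linarith
      then show False using k False unfolding r0_def by simp
    qed
    show ?thesis
    proof (cases "k < a")
      case True then show ?thesis unfolding pp_def using False g1 m2 by simp
    next
      case ka: False
      have "k \<noteq> a"
      proof
        assume "k = a"
        then have "r0 = k" unfolding r0_def using k by simp
        then show False using False by simp
      qed
      then have "a \<le> k - 1" "0 < k" using ka by auto
      then show ?thesis unfolding pp_def using False ka gl[OF _ k] m2 by simp
    qed
  qed
  have Lk: "qq k \<le> m \<and> good (rr k) (qq k)" if "k < Suc m" for k
    using pk gm unfolding qq_def rr_def by auto
  have qqm: "qq k = m \<Longrightarrow> k = m" if "k < Suc m" for k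
  proof (rule ccontr)
    assume q: "qq k = m" and "k \<noteq> m"
    then have k: "k < m" using that by simp
    then have "pp k < m" using pk[OF k] by (cases "k = r0") (auto simp: pp_def)
    then show False using q k unfolding qq_def by simp
  qed
  have qq0: "qq k = 0 \<Longrightarrow> k = r0" if "k < Suc m" for k
  proof (rule ccontr)
    assume q: "qq k = 0" and kr: "k \<noteq> r0"
    show False
    proof (cases "k < m")
      case True then show False using pk[OF True] kr q unfolding qq_def by simp
    next
      case False
      then have km: "k = m" using that by simp
      then have "m = 0" using q False unfolding qq_def by simp
      then have "r0 = 0" "k = 0" using am km unfolding r0_def by auto
      then show False using kr by simp
    qed
  qed
  show ?thesis
  proof (rule paths_ok[OF E, of L])
    fix k assume k: "k < card C"
    then have k': "k < Suc m" using cardC by simp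
    have q: "qq k \<le> length sig" "good (rr k) (qq k)" using Lk[OF k'] unfolding m_def by auto
    show "L k \<noteq> [] \<and> hd (L k) = {} \<and> last (L k) = insert n (set sig) \<and> distinct (L k) \<and>
       set (L k) \<subseteq> Pow C \<and> (\<forall>j. Suc j < length (L k) \<longrightarrow> Q (flipset s (L k ! j)) (flipset s (L k ! Suc j)))"
      unfolding L_def using R.LB_ne R.LB_hd R.LB_last[OF q(1)] R.LB_distinct[OF q(1)]
        R.LB_sub[OF q(1)] Csig LB_valid[OF nC q] by auto
  next
    fix k l assume k: "k < card C" and l: "l < card C" and kl: "k \<noteq> l"
    then have k': "k < Suc m" and l': "l < Suc m" using cardC by auto
    have m0: "0 < m" using k' l' kl by linarith
    have rk: "rr k < m" "rr l < m" unfolding rr_def r0_def using m0 by auto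
    have H1: "\<not> (qq k = m \<and> qq l = m)" using qqm[OF k'] qqm[OF l'] kl by auto
    have H2: "\<not> (qq k = 0 \<and> qq l = 0)" using qq0[OF k'] qq0[OF l'] kl by auto
    have H3: "(qq k = 0 \<and> qq l = m) \<or> (qq k = m \<and> qq l = 0)" if "rr k = rr l"
    proof (cases "k < m")
      case True
      then have "l = m" "k = r0" using that kl l' unfolding rr_def by (auto split: if_splits)
      then show ?thesis unfolding qq_def pp_def using True by simp
    next
      case False
      then have "k = m" using k' by simp
      then have "l < m" "l = r0" using that kl l' unfolding rr_def by (auto split: if_splits)
      then show ?thesis unfolding qq_def pp_def using \<open>k = m\<close> by simp
    qed
    have d: "set (L k) \<inter> set (L l) \<subseteq> {{}, insert n (set sig)}"
      unfolding L_def using R.LB_disj[OF rk[unfolded m_def] Lk[OF k', THEN conjunct1, unfolded m_def]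
          Lk[OF l', THEN conjunct1, unfolded m_def]] H1 H2 H3 unfolding m_def by blast
    have "L k ! 1 \<in> set (L k)" unfolding L_def by (rule nth_mem) simp
    moreover have "card (L k ! 1) = 1" unfolding L_def
      using R.LB_card[OF Lk[OF k', THEN conjunct1, unfolded m_def], of 1] by simp
    moreover have "card (insert n (set sig)) = Suc m" using Csig cardC by simp
    ultimately have "L k ! 1 \<notin> {{}, insert n (set sig)}" using m0 by auto
    then have "L k \<noteq> L l" using d \<open>L k ! 1 \<in> set (L k)\<close> by auto
    with d show "set (L k) \<inter> set (L l) \<subseteq> {{}, insert n (set sig)} \<and> L k \<noteq> L l" by simp
  qed
qed

theorem HK: HKgoal
proof (cases "n \<in> C")
  case False then show ?thesis by (rule case1)
next
  case True
  show ?thesis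
  proof (cases "tg s' = tg t'")
    case True then show ?thesis using case3 \<open>n \<in> C\<close> by blast
  next
    case False then show ?thesis using case2 \<open>n \<in> C\<close> by blast
  qed
qed

end



lemma SHK_Phi:
  assumes n2: "2 \<le> n" and mono: "monotone_bool (n - 1) f"
  shows "strongly_holt_klee n (Phi n f)"
  unfolding strongly_holt_klee_def holt_klee_def
proof (intro allI impI)
  fix F v C s t
  assume v: "v \<subseteq> {1..n}" and C: "C \<subseteq> {1..n}"
    and src: "is_source_in (reorient F (Phi n f)) v C s"
    and snk: "is_sink_in (reorient F (Phi n f)) v C t"
  interpret hk n f F v C s t
    using n2 mono v C src snk by unfold_locales
  show "\<exists>P :: nat \<Rightarrow> nat set list. inj_on P {..<card C} \<and>
           (\<forall>k<card C. dipath_in (reorient F (Phi n f)) (subcube v C) (P k) s t) \<and>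
           (\<forall>k<card C. \<forall>l<card C. k \<noteq> l \<longrightarrow> (set (P k) \<inter> set (P l)) \<subseteq> {s, t})"
    by (rule HK)
qed

theorem mainTheorem3:
  fixes n :: nat and f :: "nat set \<Rightarrow> bool"
  assumes "n \<ge> 2" and "monotone_bool (n - 1) f"
  shows "USO n (Phi n f) \<and> acyclic_orientation (Phi n f) \<and> locally_uniform n (Phi n f)
         \<and> strongly_holt_klee n (Phi n f)
         \<and> (\<forall>g. monotone_bool (n - 1) g \<longrightarrow> (\<exists>x. x \<subseteq> {1..n-1} \<and> f x \<noteq> g x)
                 \<longrightarrow> Phi n f \<noteq> Phi n g)"
  using USO_Phi[OF assms(1)] acyclic_Phi[OF assms(1)] LU_Phi[OF assms] SHK_Phi[OF assms]
    distinct_Phi[OF assms(1)] by blast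

end
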